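(* Let $n=12$. There is no permutation sequence $(\pi_1,\ldots,\pi_{12})$ of length $12$ with the following property: for every $t\in[12]$, every $s\ge 1$ with $s+t-1\le 12$, and every player $i\in N$, there exists a day $d\in\{s,s+1,\ldots,s+t-1\}$ with $\pi_d(i)\le \lceil 12/t\rceil$.
   Context: $N$ is a set of $n$ players and $[n]=\{1,\ldots,n\}$ a set of $n$ items (smaller number = better item). A permutation sequence of length $n$ is an ordered tuple $(\pi_1,\ldots,\pi_n)$ of bijections $\pi_d : N\to[n]$; on day $d$ player $i$ receives item $\pi_d(i)$. *)

theory Defs
  imports Complex_Main
begin

definition perm_seq :: "'a set \<Rightarrow> nat \<Rightarrow> (nat \<Rightarrow> 'a \<Rightarrow> nat) \<Rightarrow> bool" where
  "perm_seq N n \<pi> \<longleftrightarrow> (\<forall>d\<in>{1..n}. bij_betw (\<pi> d) N {1..n})"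

definition window_good :: "'a set \<Rightarrow> nat \<Rightarrow> (nat \<Rightarrow> 'a \<Rightarrow> nat) \<Rightarrow> bool" where
  "window_good N n \<pi> \<longleftrightarrow>
     (\<forall>t\<in>{1..n}. \<forall>s. 1 \<le> s \<and> s + t - 1 \<le> n \<longrightarrow>
        (\<forall>i\<in>N. \<exists>d\<in>{s..s+t-1}. real (\<pi> d i) \<le> real_of_int (ceiling (real n / real t))))"

end

theory Submission
  imports Defs
begin

lemma day_card:
  assumes "bij_betw f N {1..(n::nat)}" "c \<le> n"
  shows "card {i\<in>N. f i \<le> c} = c"
proof -
  have "f ` {i\<in>N. f i \<le> c} = {1..c}"
    using assms(1,2) unfolding bij_betw_def by (force simp: image_iff)
  moreover have "inj_on f {i\<in>N. f i \<le> c}"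
    using assms(1) unfolding bij_betw_def by (auto intro: inj_on_subset)
  ultimately show ?thesis by (metis card_atLeastAtMost card_image diff_Suc_1)
qed

lemma unique_day:
  fixes N :: "'a set"
  assumes fin: "finite N" and cN: "card N = n"
    and bij: "\<And>d. d \<in> W \<Longrightarrow> bij_betw (\<pi> d) N {1..n}"
    and finW: "finite W" and cW: "card W * c = n" and cle: "c \<le> n"
    and ex: "\<And>i. i \<in> N \<Longrightarrow> \<exists>d\<in>W. \<pi> d i \<le> c"
    and i: "i \<in> N" and d1: "d1 \<in> W" "\<pi> d1 i \<le> c" and d2: "d2 \<in> W" "\<pi> d2 i \<le> c"
  shows "d1 = d2"
proof -
  define S where "S = Sigma W (\<lambda>d. {i\<in>N. \<pi> d i \<le> c})"
  have finS: "finite S" unfolding S_def using fin finW by auto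
  have "card S = (\<Sum>d\<in>W. card {i\<in>N. \<pi> d i \<le> c})"
    unfolding S_def using fin finW by (subst card_SigmaI) auto
  also have "\<dots> = (\<Sum>d\<in>W. c)" using day_card[OF bij cle] by simp
  also have "\<dots> = n" using cW by simp
  finally have cS: "card S = n" .
  have "snd ` S = N" unfolding S_def using ex by force
  then have "inj_on snd S" using finS cS cN by (simp add: inj_on_iff_eq_card)
  moreover have "(d1, i) \<in> S" "(d2, i) \<in> S" unfolding S_def using d1 d2 i by auto
  ultimately show ?thesis by (metis inj_on_def prod.inject snd_conv)
qed

theorem mainTheorem8:
  fixes N :: "'a set"
  assumes "finite N" and "card N = 12"
  shows "\<not> (\<exists>\<pi>. perm_seq N 12 \<pi> \<and> window_good N 12 \<pi>)"
proof
  assume "\<exists>\<pi>. perm_seq N 12 \<pi> \<and> window_good N 12 \<pi>"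
  then obtain \<pi> where P: "perm_seq N 12 \<pi>" and G: "window_good N 12 \<pi>" by blast
  have G6: "\<exists>d\<in>{s..s+5}. \<pi> d i \<le> 2" if "1 \<le> s" "s + 5 \<le> 12" "i \<in> N" for s i
  proof -
    have "\<exists>d\<in>{s..s+6-1}. real (\<pi> d i) \<le> real_of_int (ceiling (real 12 / real (6::nat)))"
      using G[unfolded window_good_def, rule_format, of 6 s i] that by simp
    moreover have "real_of_int (ceiling (real 12 / real (6::nat))) = 2" by simp
    ultimately have "\<exists>d\<in>{s..s+6-1}. real (\<pi> d i) \<le> real (2::nat)" by simp
    then show ?thesis by (simp add: add.commute)
  qed
  have G4: "\<exists>d\<in>{s..s+3}. \<pi> d i \<le> 3" if "1 \<le> s" "s + 3 \<le> 12" "i \<in> N" for s i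
  proof -
    have "\<exists>d\<in>{s..s+4-1}. real (\<pi> d i) \<le> real_of_int (ceiling (real 12 / real (4::nat)))"
      using G[unfolded window_good_def, rule_format, of 4 s i] that by simp
    moreover have "real_of_int (ceiling (real 12 / real (4::nat))) = 3" by simp
    ultimately have "\<exists>d\<in>{s..s+4-1}. real (\<pi> d i) \<le> real (3::nat)" by simp
    then show ?thesis by (simp add: add.commute)
  qed
  have B: "\<And>d. d \<in> {1..12} \<Longrightarrow> bij_betw (\<pi> d) N {1..12}" using P unfolding perm_seq_def by auto
  have U6: "d1 = d2" if "1 \<le> s" "s + 5 \<le> 12" "i \<in> N" "d1 \<in> {s..s+5}" "\<pi> d1 i \<le> 2"
     "d2 \<in> {s..s+5}" "\<pi> d2 i \<le> 2" for s i d1 d2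
    apply (rule unique_day[OF assms(1,2), of "{s..s+5}" \<pi> 2 i])
    using that B G6 by auto
  have U4: "d1 = d2" if "1 \<le> s" "s + 3 \<le> 12" "i \<in> N" "d1 \<in> {s..s+3}" "\<pi> d1 i \<le> 3"
     "d2 \<in> {s..s+3}" "\<pi> d2 i \<le> 3" for s i d1 d2
    apply (rule unique_day[OF assms(1,2), of "{s..s+3}" \<pi> 3 i])
    using that B G4 by auto
  have "1 \<in> {1..(12::nat)}" by simp
  then obtain i where i: "i \<in> N" "\<pi> 1 i = 1"
    using B[of 1] unfolding bij_betw_def by (metis imageE)
  obtain d where d: "d \<in> {2..7}" "\<pi> d i \<le> 2" using G6[of 2 i] i by auto
  have "d = 7"
  proof (rule ccontr)
    assume "d \<noteq> 7"
    then have "d \<in> {1..6}" using d by auto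
    then have "d = 1" using U6[of 1 i d 1] i d by auto
    then show False using d by auto
  qed
  then have d7: "\<pi> 7 i \<le> 3" using d by auto
  have n1: "\<pi> e i > 3" if "e \<in> {2..4}" for e
    using U4[of 1 i e 1] i that by force
  have n2: "\<pi> e i > 3" if "e \<in> {4..6}" for e
    using U4[of 4 i e 7] i that d7 by force
  obtain e where "e \<in> {2..5}" "\<pi> e i \<le> 3" using G4[of 2 i] i by auto
  then show False using n1[of e] n2[of e] by (cases "e \<le> 4") auto
qed

end
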